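(* Let $\alpha\in(0,2)$ and $\alpha_0\in(0,\alpha\wedge1)$, and suppose $$\limsup_{|x|\to\infty}\bigg[\Big(\sup_{|z|\ge|x|}e^{-V(z)}\Big)|x|^{d+\alpha-\alpha_0}\bigg]=0.$$ Then there is $C_0>0$ such that for all $f\in C_b^\infty(\mathbb R^d)$, $$\int\big(f(x)-\mu_{2V}(f)\big)^2\frac{e^{V(x)}}{(1+|x|)^{d+\alpha}}\mu_{2V}(dx)\le C_0\iint\frac{(f(y)-f(x))^2}{|y-x|^{d+\alpha}}e^{-V(y)}dy\,e^{-V(x)}dx.$$
   Context: Let $d\ge1$. $V:\mathbb R^d\to\mathbb R$ is a locally bounded measurable function such that $e^{-V}$ is bounded and $\int e^{-V(x)}dx<\infty$. $\mu_{2V}(dx):=\frac{e^{-2V(x)}}{\int e^{-2V(y)}dy}dx$, $\mu_{2V}(f)=\int f\,d\mu_{2V}$. $C_b^\infty$ denotes smooth functions bounded with all derivatives. *)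

theory Defs
  imports "HOL-Analysis.Analysis"
begin

inductive_set iter_partials :: "('a::euclidean_space \<Rightarrow> real) \<Rightarrow> ('a \<Rightarrow> real) set"
  for f :: "'a \<Rightarrow> real" where
  base: "f \<in> iter_partials f"
| step: "g \<in> iter_partials f \<Longrightarrow> b \<in> Basis \<Longrightarrow>
          (\<lambda>x. frechet_derivative g (at x) b) \<in> iter_partials f"

definition Cb_inf :: "('a::euclidean_space \<Rightarrow> real) \<Rightarrow> bool" where
  "Cb_inf f \<longleftrightarrow> (\<forall>g \<in> iter_partials f. g differentiable_on UNIV \<and> bounded (range g))"

definition mu2V :: "('a::euclidean_space \<Rightarrow> real) \<Rightarrow> ('a \<Rightarrow> real) \<Rightarrow> real" where
  "mu2V V f = (\<integral>x. f x * exp (- 2 * V x) \<partial>lebesgue) / (\<integral>y. exp (- 2 * V y) \<partial>lebesgue)"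

end

theory Submission
  imports Defs
begin


lemma quad_disc:
  fixes a b c :: real
  assumes a: "a \<ge> 0" and q: "\<And>t. 0 \<le> t^2 * a - 2 * t * b + c"
  shows "b^2 \<le> a * c"
proof (cases "a = 0")
  case True
  show ?thesis
  proof (cases "b = 0")
    case False
    have "0 \<le> ((c + 1) / (2 * b))^2 * a - 2 * ((c + 1) / (2 * b)) * b + c" by (rule q)
    moreover have "2 * ((c + 1) / (2 * b)) * b = c + 1" using False by simp
    ultimately show ?thesis using True by simp
  qed (use True q[of 0] in simp)
next
  case False
  with a have ap: "a > 0" by simp
  have "0 \<le> (b / a)^2 * a - 2 * (b / a) * b + c" by (rule q)
  moreover have "(b / a)^2 * a = b^2 / a" using ap by (simp add: power2_eq_square)
  moreover have "2 * (b / a) * b = 2 * (b^2 / a)" by (simp add: power2_eq_square)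
  ultimately have "b^2 / a \<le> c" by linarith
  thus ?thesis using ap by (simp add: divide_le_eq mult.commute)
qed
lemma eqt: fixes t u v w :: real assumes "w \<noteq> 0" shows "t^2 * (u^2 * w) - 2 * t * (u * v) + v^2 / w = (t * u * w - v)^2 / w"
  using assms by (simp add: field_simps power2_eq_square)

lemma cs_weighted:
  fixes u v w :: "'b \<Rightarrow> real"
  assumes w: "\<And>x. 0 < w x"
    and i1: "integrable M (\<lambda>x. u x^2 * w x)" and i2: "integrable M (\<lambda>x. v x^2 / w x)"
    and i3: "integrable M (\<lambda>x. u x * v x)"
  shows "(\<integral>x. u x * v x \<partial>M)^2 \<le> (\<integral>x. u x^2 * w x \<partial>M) * (\<integral>x. v x^2 / w x \<partial>M)"
proof (rule quad_disc)
  show "0 \<le> (\<integral>x. u x^2 * w x \<partial>M)"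
  proof -
    have "\<And>x. 0 \<le> u x^2 * w x" using w by (simp add: less_imp_le)
    thus ?thesis by (simp add: integral_nonneg_AE)
  qed
  fix t :: real
  have eq: "(\<lambda>x. t^2 * (u x^2 * w x) - 2 * t * (u x * v x) + v x^2 / w x)
      = (\<lambda>x. (t * u x * w x - v x)^2 / w x)"
  proof
    fix x
    have "w x \<noteq> 0" using w[of x] by simp
    thus "t^2 * (u x^2 * w x) - 2 * t * (u x * v x) + v x^2 / w x = (t * u x * w x - v x)^2 / w x"
      by (rule eqt)
  qed
  have h: "(\<integral>x. t^2 * (u x^2 * w x) - 2 * t * (u x * v x) + v x^2 / w x \<partial>M)
     = t^2 * (\<integral>x. u x^2 * w x \<partial>M) - 2 * t * (\<integral>x. u x * v x \<partial>M) + (\<integral>x. v x^2 / w x \<partial>M)"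
    using i1 i2 i3 by simp
  have "\<And>x. 0 \<le> (t * u x * w x - v x)^2 / w x" using w by (simp add: less_imp_le)
  hence "0 \<le> (\<integral>x. (t * u x * w x - v x)^2 / w x \<partial>M)" by (simp add: integral_nonneg_AE)
  hence "0 \<le> (\<integral>x. t^2 * (u x^2 * w x) - 2 * t * (u x * v x) + v x^2 / w x \<partial>M)"
    by (simp only: eq)
  thus "0 \<le> t^2 * (\<integral>x. u x^2 * w x \<partial>M) - 2 * t * (\<integral>x. u x * v x \<partial>M) + (\<integral>x. v x^2 / w x \<partial>M)"
    using h by linarith
qed

lemma integral_pos_lemma:
  fixes g :: "'b \<Rightarrow> real"
  assumes g: "integrable M g" and nn: "\<And>x. 0 \<le> g x" and N: "N \<in> sets M" and NM: "emeasure M N \<noteq> 0"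
    and pos: "\<And>x. x \<in> N \<Longrightarrow> 0 < g x"
  shows "0 < integral\<^sup>L M g"
proof -
  have "integral\<^sup>L M g \<noteq> 0"
  proof
    assume "integral\<^sup>L M g = 0"
    hence "AE x in M. g x = 0" using integral_nonneg_eq_0_iff_AE[OF g] nn by simp
    hence "AE x in M. x \<notin> N" by eventually_elim (use pos in force)
    moreover have "(AE x in M. x \<notin> N) \<longleftrightarrow> emeasure M N = 0"
      by (rule AE_iff_measurable[OF N]) (use sets.sets_into_space[OF N] in auto)
    ultimately have "emeasure M N = 0" by simp
    with NM show False by simp
  qed
  moreover have "0 \<le> integral\<^sup>L M g" by (intro integral_nonneg_AE AE_I2) (use nn in auto)
  ultimately show ?thesis by simp
qed

lemma int_by_bound:
  fixes g r :: "'b \<Rightarrow> real"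
  assumes r: "integrable M r" and g: "g \<in> borel_measurable M" and b: "\<And>x. \<bar>g x\<bar> \<le> C * r x"
  shows "integrable M g"
proof -
  have ae: "AE x in M. norm (g x) \<le> norm (C * r x)"
  proof (rule AE_I2)
    fix x have "0 \<le> C * r x" using b[of x] by linarith
    thus "norm (g x) \<le> norm (C * r x)" using b[of x] by simp
  qed
  have ri: "integrable M (\<lambda>x. C * r x)" using r by simp
  show ?thesis by (rule Bochner_Integration.integrable_bound[OF ri g ae])
qed



theorem corollary5p5:
  fixes V :: "'a::euclidean_space \<Rightarrow> real" and \<alpha> \<alpha>0 :: real
  assumes V_meas: "V \<in> borel_measurable lebesgue"
    and V_locbdd: "\<And>K. compact K \<Longrightarrow> bounded (V ` K)"
    and expV_bdd: "bounded (range (\<lambda>x. exp (- V x)))"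
    and expV_int: "integrable lebesgue (\<lambda>x. exp (- V x))"
    and alpha: "0 < \<alpha>" "\<alpha> < 2"
    and alpha0: "0 < \<alpha>0" "\<alpha>0 < min \<alpha> 1"
    and decay: "Limsup at_infinity (\<lambda>x::'a. ereal ((SUP z\<in>{z. norm z \<ge> norm x}. exp (- V z))
                   * norm x powr (real DIM('a) + \<alpha> - \<alpha>0))) = 0"
  shows "\<exists>C0>0. \<forall>f. Cb_inf f \<longrightarrow>
    (\<integral>\<^sup>+ x. ennreal ((f x - mu2V V f)\<^sup>2 * exp (V x) / (1 + norm x) powr (real DIM('a) + \<alpha>)
        * (exp (- 2 * V x) / (\<integral>y. exp (- 2 * V y) \<partial>lebesgue))) \<partial>lebesgue)
    \<le> ennreal C0 * (\<integral>\<^sup>+ x. (\<integral>\<^sup>+ y. ennreal ((f y - f x)\<^sup>2 / norm (y - x) powr (real DIM('a) + \<alpha>)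
        * exp (- V y)) \<partial>lebesgue) * ennreal (exp (- V x)) \<partial>lebesgue)"
proof -
  define D where "D = real DIM('a) + \<alpha>"
  define \<rho> where "\<rho> x = exp (- V x)" for x
  define k where "k x = 1 / (1 + norm x) powr D" for x :: 'a
  define B where "B = ball (0::'a) 1"
  have Dpos: "0 < D" using alpha by (simp add: D_def add_nonneg_pos)
  have D1: "2 * \<alpha>0 \<le> D"
  proof -
    have "1 \<le> real DIM('a)" using DIM_positive[where 'a='a] by linarith
    moreover have "\<alpha>0 < \<alpha>" "\<alpha>0 < 1" using alpha0(2) by auto
    ultimately show ?thesis unfolding D_def by linarith
  qed
  have \<rho>pos: "0 < \<rho> x" for x by (simp add: \<rho>_def)
  have \<rho>ne: "\<rho> x \<noteq> 0" for x using \<rho>pos[of x] by simp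
  obtain M where M: "\<And>x. \<rho> x \<le> M"
    using expV_bdd unfolding bounded_iff \<rho>_def by (metis abs_le_D1 rangeI real_norm_def)
  have Mpos: "0 < M" using \<rho>pos[of 0] M[of 0] by linarith
  have kpos: "0 < k x" for x
  proof -
    have "1 + norm x \<noteq> 0" using norm_ge_zero[of x] by linarith
    thus ?thesis by (simp add: k_def)
  qed
  have k1: "k x \<le> 1" for x
  proof -
    have "1 \<le> (1 + norm x) powr D" using Dpos by (intro ge_one_powr_ge_zero) auto
    thus ?thesis by (simp add: k_def divide_le_eq_1)
  qed
  have nm: "(\<lambda>x::'a. norm x) \<in> borel_measurable lebesgue"
    by (simp add: borel_measurable_continuous_onI measurable_completion)
  have im: "(\<lambda>x::'a. indicator B x :: real) \<in> borel_measurable lebesgue"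
    unfolding B_def by (simp add: borel_measurable_indicator)
  have \<rho>m: "\<rho> \<in> borel_measurable lebesgue"
    using measurable_compose[OF borel_measurable_uminus[OF V_meas] borel_measurable_exp]
    by (simp add: o_def \<rho>_def[abs_def])
  note rls = borel_measurable_times borel_measurable_add borel_measurable_diff borel_measurable_divide
     borel_measurable_power powr_real_measurable borel_measurable_const nm im \<rho>m
  have km: "k \<in> borel_measurable lebesgue" unfolding k_def[abs_def] by (intro rls)
  have \<rho>int: "integrable lebesgue \<rho>" using expV_int by (simp add: \<rho>_def[abs_def])
  have intB: "integrable lebesgue g" if "g \<in> borel_measurable lebesgue" "\<And>x. \<bar>g x\<bar> \<le> C * \<rho> x" for g C
    by (rule int_by_bound[OF \<rho>int that])
  have ev: "\<forall>\<^sub>F x in at_infinity. ereal ((SUP z\<in>{z. norm z \<ge> norm x}. exp (- V z)) * norm (x::'a) powr (D - \<alpha>0)) < 1"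
    by (rule Limsup_lessD) (use decay in \<open>simp add: D_def\<close>)
  then obtain b where b: "\<And>x::'a. b \<le> norm x \<Longrightarrow> (SUP z\<in>{z. norm z \<ge> norm x}. exp (- V z)) * norm x powr (D - \<alpha>0) < 1"
    unfolding eventually_at_infinity by auto
  define R0 where "R0 = max b 1"
  have bddS: "bdd_above ((\<lambda>z. exp (- V z)) ` S)" for S
    using M unfolding bdd_above_def \<rho>_def by auto
  have far: "\<rho> x ^ 2 * (1 + norm x) powr D \<le> 2 powr D" if "R0 \<le> norm x" for x
  proof -
    have x1: "1 \<le> norm x" and xb: "b \<le> norm x" using that by (auto simp: R0_def)
    have "\<rho> x \<le> (SUP z\<in>{z. norm z \<ge> norm x}. exp (- V z))"
      unfolding \<rho>_def by (rule cSUP_upper) (auto intro: bddS)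
    hence "\<rho> x * norm x powr (D - \<alpha>0) \<le> (SUP z\<in>{z. norm z \<ge> norm x}. exp (- V z)) * norm x powr (D - \<alpha>0)"
      by (rule mult_right_mono) simp
    also have "\<dots> < 1" using b[OF xb] .
    finally have a: "\<rho> x * norm x powr (D - \<alpha>0) < 1" .
    have "norm x powr (D / 2) \<le> norm x powr (D - \<alpha>0)" using x1 D1 by (intro powr_mono) auto
    hence "\<rho> x * norm x powr (D / 2) \<le> \<rho> x * norm x powr (D - \<alpha>0)"
      using \<rho>pos[of x] by (intro mult_left_mono) auto
    with a have q: "\<rho> x * norm x powr (D / 2) \<le> 1" by linarith
    have q0: "0 \<le> \<rho> x * norm x powr (D / 2)" using \<rho>pos[of x] by simp
    have "(1 + norm x) powr D \<le> (2 * norm x) powr D" using x1 Dpos by (intro powr_mono2) auto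
    also have "\<dots> = 2 powr D * (norm x powr (D / 2) * norm x powr (D / 2))"
      by (simp add: powr_mult powr_add[symmetric])
    finally have "\<rho> x ^ 2 * (1 + norm x) powr D \<le> \<rho> x ^ 2 * (2 powr D * (norm x powr (D / 2) * norm x powr (D / 2)))"
      by (intro mult_left_mono) auto
    also have "\<dots> = 2 powr D * (\<rho> x * norm x powr (D / 2))^2" by (simp add: power2_eq_square)
    also have "\<dots> \<le> 2 powr D * 1" using q q0 by (intro mult_left_mono power_le_one) auto
    finally show ?thesis by simp
  qed
  have near: "\<rho> x ^ 2 * (1 + norm x) powr D \<le> M^2 * (1 + R0) powr D" if "norm x \<le> R0" for x
  proof (rule mult_mono)
    show "\<rho> x ^ 2 \<le> M ^ 2" using \<rho>pos[of x] M[of x] by (intro power_mono) auto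
    show "(1 + norm x) powr D \<le> (1 + R0) powr D" using that Dpos by (intro powr_mono2) auto
  qed auto
  define Bd where "Bd = 2 powr D + M^2 * (1 + R0) powr D"
  have Bd: "\<rho> x ^ 2 * (1 + norm x) powr D \<le> Bd" for x
  proof -
    have "0 \<le> 2 powr D" "0 \<le> M^2 * (1 + R0) powr D" by auto
    thus ?thesis using far[of x] near[of x] unfolding Bd_def by linarith
  qed
  have \<rho>2: "exp (- 2 * V x) = \<rho> x ^ 2" for x
    by (simp add: \<rho>_def power2_eq_square exp_add[symmetric])
  define Z where "Z = (\<integral>y. exp (- 2 * V y) \<partial>lebesgue)"
  have Z_eq: "Z = (\<integral>y. \<rho> y ^ 2 \<partial>lebesgue)" unfolding Z_def by (simp only: \<rho>2)
  have \<rho>sq_int: "integrable lebesgue (\<lambda>y. \<rho> y ^ 2)"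
  proof (rule intB[where C=M])
    show "(\<lambda>y. \<rho> y ^ 2) \<in> borel_measurable lebesgue" by (intro rls)
    fix x show "\<bar>\<rho> x ^ 2\<bar> \<le> M * \<rho> x"
      using \<rho>pos[of x] M[of x] by (simp add: power2_eq_square mult_right_mono)
  qed
  have Zpos: "0 < Z" unfolding Z_eq
    by (rule integral_pos_lemma[OF \<rho>sq_int, where N=UNIV]) (auto simp: \<rho>pos \<rho>ne less_imp_le)
  define m where "m = (\<integral>z. indicator B z * \<rho> z \<partial>lebesgue)"
  have \<chi>\<rho>_int: "integrable lebesgue (\<lambda>z. indicator B z * \<rho> z)"
  proof (rule intB[where C=1])
    show "(\<lambda>z. indicator B z * \<rho> z) \<in> borel_measurable lebesgue" by (intro rls)
    fix x show "\<bar>indicator B x * \<rho> x\<bar> \<le> 1 * \<rho> x"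
      using \<rho>pos[of x] by (simp add: indicator_def)
  qed
  have Bm: "emeasure lebesgue B \<noteq> 0"
  proof -
    have "emeasure lebesgue (ball (0::'a) 1) = emeasure lborel (ball (0::'a) 1)"
      by (simp add: emeasure_completion)
    moreover have ne: "unit_ball_vol (real DIM('a)) \<noteq> 0"
    proof -
      have "0 < unit_ball_vol (real DIM('a))" by simp
      thus ?thesis by linarith
    qed
    ultimately show ?thesis by (simp add: emeasure_ball B_def ne)
  qed
  have mpos: "0 < m" unfolding m_def
    by (rule integral_pos_lemma[OF \<chi>\<rho>_int _ _ Bm]) (auto simp: \<rho>pos \<rho>ne less_imp_le B_def indicator_def)
  define K3 where "K3 = (\<integral>y. \<rho> y ^ 3 * (1 + norm y) powr D \<partial>lebesgue)"
  have int3: "integrable lebesgue (\<lambda>y. \<rho> y ^ 3 * (1 + norm y) powr D)"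
  proof (rule intB[where C=Bd])
    show "(\<lambda>y. \<rho> y ^ 3 * (1 + norm y) powr D) \<in> borel_measurable lebesgue" by (intro rls)
    fix x
    have "\<rho> x ^ 3 * (1 + norm x) powr D = \<rho> x * (\<rho> x ^ 2 * (1 + norm x) powr D)"
      by (simp add: power2_eq_square power3_eq_cube)
    also have "\<dots> \<le> \<rho> x * Bd" using Bd[of x] \<rho>pos[of x] by (intro mult_left_mono) auto
    finally show "\<bar>\<rho> x ^ 3 * (1 + norm x) powr D\<bar> \<le> Bd * \<rho> x"
      using \<rho>pos[of x] by (simp add: mult.commute)
  qed
  define I1 where "I1 = (\<integral>y. \<rho> y * k y \<partial>lebesgue)"
  have int1: "integrable lebesgue (\<lambda>y. \<rho> y * k y)"
  proof (rule intB[where C=1])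
    show "(\<lambda>y. \<rho> y * k y) \<in> borel_measurable lebesgue" by (intro rls km)
    fix x show "\<bar>\<rho> x * k x\<bar> \<le> 1 * \<rho> x"
      using \<rho>pos[of x] kpos[of x] k1[of x] by (simp add: mult_left_le)
  qed
  have K3nn: "0 \<le> K3" unfolding K3_def using \<rho>pos by (simp add: integral_nonneg_AE less_imp_le)
  have I1nn: "0 \<le> I1" unfolding I1_def using \<rho>pos kpos by (simp add: integral_nonneg_AE less_imp_le)
  define C0 where "C0 = (2 / Z + 2 * K3 * I1 / Z ^ 3) / m"
  have C0pos: "0 < C0" unfolding C0_def using Zpos mpos K3nn I1nn
    by (intro divide_pos_pos add_pos_nonneg) auto
  show ?thesis unfolding D_def[symmetric]
  proof (intro exI[of _ C0] conjI allI impI C0pos)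
    fix f :: "'a \<Rightarrow> real" assume Cf: "Cb_inf f"
    show "(\<integral>\<^sup>+ x. ennreal ((f x - mu2V V f)\<^sup>2 * exp (V x) / (1 + norm x) powr D
        * (exp (- 2 * V x) / (\<integral>y. exp (- 2 * V y) \<partial>lebesgue))) \<partial>lebesgue)
    \<le> ennreal C0 * (\<integral>\<^sup>+ x. (\<integral>\<^sup>+ y. ennreal ((f y - f x)\<^sup>2 / norm (y - x) powr D
        * exp (- V y)) \<partial>lebesgue) * ennreal (exp (- V x)) \<partial>lebesgue)"
    proof -
    have "f differentiable_on UNIV" "bounded (range f)"
      using Cf unfolding Cb_inf_def by (auto intro: iter_partials.base)
    hence contf: "continuous_on UNIV f" and "bounded (range f)"
      by (auto intro: differentiable_imp_continuous_on)
    then obtain F where F: "\<And>x. \<bar>f x\<bar> \<le> F"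
      unfolding bounded_iff by (metis rangeI real_norm_def)
    have fm: "f \<in> borel_measurable lebesgue"
      using contf by (simp add: borel_measurable_continuous_onI measurable_completion)
    note rls = rls fm km
    define c where "c = (\<integral>z. indicator B z * f z * \<rho> z \<partial>lebesgue) / m"
    define A where "A = (\<integral>x. (f x - c)^2 * \<rho> x * k x \<partial>lebesgue)"
    have fcb: "(f x - c)^2 \<le> (F + \<bar>c\<bar>)^2" for x
    proof -
      have "\<bar>f x - c\<bar> \<le> F + \<bar>c\<bar>" using F[of x] by linarith
      hence "\<bar>f x - c\<bar>^2 \<le> (F + \<bar>c\<bar>)^2" by (intro power_mono) auto
      thus ?thesis by simp
    qed
    have intA: "integrable lebesgue (\<lambda>x. (f x - c)^2 * \<rho> x * k x)"
    proof (rule intB[where C="(F + \<bar>c\<bar>)^2"])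
      show "(\<lambda>x. (f x - c)^2 * \<rho> x * k x) \<in> borel_measurable lebesgue" by (intro rls)
      fix x
      have "(f x - c)^2 * \<rho> x * k x \<le> (F + \<bar>c\<bar>)^2 * \<rho> x * 1"
        using fcb[of x] \<rho>pos[of x] kpos[of x] k1[of x]
        by (intro mult_mono) (auto intro: mult_nonneg_nonneg less_imp_le)
      moreover have "0 \<le> (f x - c)^2 * \<rho> x * k x"
        using \<rho>pos[of x] kpos[of x] by (auto intro: mult_nonneg_nonneg less_imp_le)
      ultimately show "\<bar>(f x - c)^2 * \<rho> x * k x\<bar> \<le> (F + \<bar>c\<bar>)^2 * \<rho> x" by simp
    qed
    have Ann: "0 \<le> A" unfolding A_def
      using \<rho>pos kpos by (simp add: integral_nonneg_AE less_imp_le)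
    define R where "R = (\<integral>\<^sup>+ x. (\<integral>\<^sup>+ y. ennreal ((f y - f x)\<^sup>2 / norm (y - x) powr D
        * exp (- V y)) \<partial>lebesgue) * ennreal (exp (- V x)) \<partial>lebesgue)"
    have intpw: "integrable lebesgue (\<lambda>z. indicator B z * (f x - f z)^2 * \<rho> z)" for x
    proof (rule intB[where C="(2*F)^2"])
      show "(\<lambda>z. indicator B z * (f x - f z)^2 * \<rho> z) \<in> borel_measurable lebesgue" by (intro rls)
      fix z
      have "\<bar>f x - f z\<bar> \<le> 2 * F" using F[of x] F[of z] by linarith
      hence "\<bar>f x - f z\<bar>^2 \<le> (2 * F)^2" by (intro power_mono) auto
      hence "(f x - f z)^2 \<le> (2 * F)^2" by simp
      hence "indicator B z * (f x - f z)^2 * \<rho> z \<le> (2 * F)^2 * \<rho> z"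
        using \<rho>pos[of z] by (auto simp: indicator_def intro: mult_right_mono)
      moreover have "0 \<le> indicator B z * (f x - f z)^2 * \<rho> z"
        using \<rho>pos[of z] by (auto simp: indicator_def less_imp_le)
      ultimately show "\<bar>indicator B z * (f x - f z)^2 * \<rho> z\<bar> \<le> (2 * F)^2 * \<rho> z" by simp
    qed
    have intfB: "integrable lebesgue (\<lambda>z. indicator B z * f z * \<rho> z)"
    proof (rule intB[where C=F])
      show "(\<lambda>z. indicator B z * f z * \<rho> z) \<in> borel_measurable lebesgue" by (intro rls)
      fix z
      have "\<bar>indicator B z * f z * \<rho> z\<bar> = indicator B z * \<bar>f z\<bar> * \<rho> z"
        using \<rho>pos[of z] by (simp add: abs_mult indicator_def)
      also have "\<dots> \<le> F * \<rho> z" using F[of z] \<rho>pos[of z]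
        by (auto simp: indicator_def intro: mult_right_mono order_trans[OF abs_ge_zero])
      finally show "\<bar>indicator B z * f z * \<rho> z\<bar> \<le> F * \<rho> z" .
    qed
    have pw: "m * (f x - c)^2 \<le> (\<integral>z. indicator B z * (f x - f z)^2 * \<rho> z \<partial>lebesgue)" for x
    proof -
      let ?u = "\<lambda>z. indicator B z * (f x - f z)"
      let ?v = "\<lambda>z. indicator B z * \<rho> z"
      have e1: "(\<lambda>z. ?u z^2 * \<rho> z) = (\<lambda>z. indicator B z * (f x - f z)^2 * \<rho> z)"
        by (auto simp: indicator_def fun_eq_iff power2_eq_square)
      have e2: "(\<lambda>z. ?v z^2 / \<rho> z) = (\<lambda>z. indicator B z * \<rho> z)"
        using \<rho>ne by (auto simp: indicator_def fun_eq_iff power2_eq_square)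
      have e3: "(\<lambda>z. ?u z * ?v z) = (\<lambda>z. f x * (indicator B z * \<rho> z) - indicator B z * f z * \<rho> z)"
        by (auto simp: indicator_def fun_eq_iff algebra_simps)
      have i3: "integrable lebesgue (\<lambda>z. ?u z * ?v z)"
        unfolding e3 using \<chi>\<rho>_int intfB by simp
      have cs: "(\<integral>z. ?u z * ?v z \<partial>lebesgue)^2 \<le> (\<integral>z. ?u z^2 * \<rho> z \<partial>lebesgue) * (\<integral>z. ?v z^2 / \<rho> z \<partial>lebesgue)"
        by (rule cs_weighted[OF \<rho>pos]) (simp_all only: e1 e2 intpw \<chi>\<rho>_int i3)
      have "(\<integral>z. ?u z * ?v z \<partial>lebesgue) = f x * m - c * m"
        unfolding e3 using \<chi>\<rho>_int intfB mpos by (simp add: m_def c_def)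
      also have "\<dots> = m * (f x - c)" by (simp add: algebra_simps)
      finally have "(m * (f x - c))^2 \<le> (\<integral>z. indicator B z * (f x - f z)^2 * \<rho> z \<partial>lebesgue) * m"
        using cs unfolding e1 e2 m_def by simp
      hence "m * (m * (f x - c)^2) \<le> m * (\<integral>z. indicator B z * (f x - f z)^2 * \<rho> z \<partial>lebesgue)"
        by (simp add: power2_eq_square algebra_simps)
      thus ?thesis using mpos by simp
    qed
    have kern: "indicator B z * (f x - f z)^2 * \<rho> z * k x \<le> (f z - f x)\<^sup>2 / norm (z - x) powr D * exp (- V z)" for x z
    proof (cases "z \<in> B \<and> z \<noteq> x")
      case True
      have "norm (z - x) \<le> norm z + norm x" by (rule norm_triangle_ineq4)
      also have "\<dots> \<le> 1 + norm x" using True by (simp add: B_def)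
      finally have "norm (z - x) powr D \<le> (1 + norm x) powr D" using Dpos by (intro powr_mono2) auto
      moreover have "0 < norm (z - x) powr D" using True by simp
      ultimately have "k x \<le> 1 / norm (z - x) powr D" unfolding k_def
        by (intro divide_left_mono mult_pos_pos) auto
      hence "(f z - f x)^2 * \<rho> z * k x \<le> (f z - f x)^2 * \<rho> z * (1 / norm (z - x) powr D)"
        using \<rho>pos[of z] by (intro mult_left_mono) auto
      thus ?thesis using True by (simp add: \<rho>_def power2_commute)
    next
      case False
      hence "indicator B z * (f x - f z)^2 * \<rho> z * k x = 0" by (auto simp: indicator_def)
      moreover have "0 \<le> (f z - f x)\<^sup>2 / norm (z - x) powr D * exp (- V z)" by simp
      ultimately show ?thesis by linarith
    qed
    have step1: "ennreal (m * A) \<le> R"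
    proof -
      have "ennreal (m * A) = (\<integral>\<^sup>+ x. ennreal (m * ((f x - c)^2 * \<rho> x * k x)) \<partial>lebesgue)"
        unfolding A_def using intA mpos \<rho>pos kpos
        by (subst nn_integral_eq_integral) (auto intro!: integrable_mult_right simp: less_imp_le)
      also have "\<dots> \<le> R" unfolding R_def
      proof (rule nn_integral_mono)
        fix x
        let ?I = "(\<integral>z. indicator B z * (f x - f z)^2 * \<rho> z \<partial>lebesgue)"
        have Inn: "0 \<le> ?I" using \<rho>pos by (simp add: integral_nonneg_AE less_imp_le)
        have eqI: "ennreal ?I = (\<integral>\<^sup>+z. ennreal (indicator B z * (f x - f z)^2 * \<rho> z) \<partial>lebesgue)"
          by (rule nn_integral_eq_integral[symmetric, OF intpw], rule AE_I2)
             (use \<rho>pos in \<open>simp add: indicator_def less_imp_le\<close>)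
        have "m * ((f x - c)^2 * \<rho> x * k x) = (m * (f x - c)^2) * k x * \<rho> x" by simp
        also have "\<dots> \<le> ?I * k x * \<rho> x"
          using pw[of x] \<rho>pos[of x] kpos[of x] by (intro mult_right_mono) auto
        finally have "ennreal (m * ((f x - c)^2 * \<rho> x * k x)) \<le> ennreal (?I * k x * \<rho> x)"
          by (rule ennreal_leI)
        also have "\<dots> = ennreal ?I * ennreal (k x) * ennreal (\<rho> x)"
          using Inn kpos[of x] \<rho>pos[of x] by (simp add: ennreal_mult less_imp_le)
        also have "\<dots> = (\<integral>\<^sup>+z. ennreal (indicator B z * (f x - f z)^2 * \<rho> z) \<partial>lebesgue) * ennreal (k x) * ennreal (\<rho> x)"
          by (simp only: eqI)
        also have "\<dots> = (\<integral>\<^sup>+z. ennreal (indicator B z * (f x - f z)^2 * \<rho> z) * ennreal (k x) \<partial>lebesgue) * ennreal (\<rho> x)"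
        proof -
          have "(\<lambda>z. indicator B z * (f x - f z)^2 * \<rho> z) \<in> borel_measurable lebesgue" by (intro rls)
          hence "(\<lambda>z. ennreal (indicator B z * (f x - f z)^2 * \<rho> z)) \<in> borel_measurable lebesgue" by simp
          from nn_integral_multc[OF this, of "ennreal (k x)"] show ?thesis by simp
        qed
        also have "\<dots> \<le> (\<integral>\<^sup>+ y. ennreal ((f y - f x)\<^sup>2 / norm (y - x) powr D * exp (- V y)) \<partial>lebesgue) * ennreal (exp (- V x))"
        proof -
          have "(\<integral>\<^sup>+z. ennreal (indicator B z * (f x - f z)^2 * \<rho> z) * ennreal (k x) \<partial>lebesgue)
              \<le> (\<integral>\<^sup>+ y. ennreal ((f y - f x)\<^sup>2 / norm (y - x) powr D * exp (- V y)) \<partial>lebesgue)"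
          proof (rule nn_integral_mono)
            fix z
            have "ennreal (indicator B z * (f x - f z)^2 * \<rho> z) * ennreal (k x)
               = ennreal (indicator B z * (f x - f z)^2 * \<rho> z * k x)"
              using kpos[of x] by (simp add: ennreal_mult'')
            also have "\<dots> \<le> ennreal ((f z - f x)\<^sup>2 / norm (z - x) powr D * exp (- V z))"
              by (rule ennreal_leI[OF kern])
            finally show "ennreal (indicator B z * (f x - f z)^2 * \<rho> z) * ennreal (k x)
               \<le> ennreal ((f z - f x)\<^sup>2 / norm (z - x) powr D * exp (- V z))" .
          qed
          thus ?thesis by (simp add: \<rho>_def mult_right_mono)
        qed
        finally show "ennreal (m * ((f x - c)^2 * \<rho> x * k x))
           \<le> (\<integral>\<^sup>+ y. ennreal ((f y - f x)\<^sup>2 / norm (y - x) powr D * exp (- V y)) \<partial>lebesgue) * ennreal (exp (- V x))" .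
      qed
      finally show ?thesis .
    qed
    have intf2: "integrable lebesgue (\<lambda>x. f x * \<rho> x ^ 2)"
    proof (rule intB[where C="F * M"])
      show "(\<lambda>x. f x * \<rho> x ^ 2) \<in> borel_measurable lebesgue" by (intro rls)
      fix x
      have "\<bar>f x * \<rho> x ^ 2\<bar> = \<bar>f x\<bar> * \<rho> x * \<rho> x" by (simp add: abs_mult power2_eq_square)
      also have "\<dots> \<le> F * M * \<rho> x"
        using F[of x] M[of x] \<rho>pos[of x] by (intro mult_mono) auto
      finally show "\<bar>f x * \<rho> x ^ 2\<bar> \<le> F * M * \<rho> x" .
    qed
    have mu_eq: "mu2V V f = (\<integral>x. f x * \<rho> x ^ 2 \<partial>lebesgue) / Z"
      unfolding mu2V_def Z_def by (simp only: \<rho>2)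
    have e4: "(\<lambda>x. (f x - c) * \<rho> x ^ 2) = (\<lambda>x. f x * \<rho> x ^ 2 - c * \<rho> x ^ 2)"
      by (simp add: fun_eq_iff algebra_simps)
    have int4: "integrable lebesgue (\<lambda>x. (f x - c) * \<rho> x ^ 2)"
      unfolding e4 using intf2 \<rho>sq_int by simp
    have diff: "(\<integral>x. (f x - c) * \<rho> x ^ 2 \<partial>lebesgue) = (\<integral>x. f x * \<rho> x ^ 2 \<partial>lebesgue) - c * Z"
      unfolding e4 Z_eq using intf2 \<rho>sq_int by simp
    have muc: "mu2V V f - c = (\<integral>x. (f x - c) * \<rho> x ^ 2 \<partial>lebesgue) / Z"
      unfolding diff mu_eq using Zpos by (simp add: field_simps)
    have e5: "(\<lambda>x. (\<rho> x ^ 2)^2 / (\<rho> x * k x)) = (\<lambda>x. \<rho> x ^ 3 * (1 + norm x) powr D)"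
    proof
      fix x :: 'a
      have "(1 + norm x) powr D > 0" using kpos[of x] by (simp add: k_def)
      thus "(\<rho> x ^ 2)^2 / (\<rho> x * k x) = \<rho> x ^ 3 * (1 + norm x) powr D"
        using \<rho>ne[of x] by (simp add: k_def field_simps power2_eq_square power3_eq_cube)
    qed
    have e6: "(\<lambda>x. (f x - c)^2 * (\<rho> x * k x)) = (\<lambda>x. (f x - c)^2 * \<rho> x * k x)"
      by (simp add: fun_eq_iff mult.assoc)
    have cs: "(\<integral>x. (f x - c) * \<rho> x ^ 2 \<partial>lebesgue)^2
        \<le> (\<integral>x. (f x - c)^2 * (\<rho> x * k x) \<partial>lebesgue) * (\<integral>x. (\<rho> x ^ 2)^2 / (\<rho> x * k x) \<partial>lebesgue)"
      by (rule cs_weighted) (simp_all only: e5 e6 intA int3 int4 mult_pos_pos[OF \<rho>pos kpos])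
    have step2: "(c - mu2V V f)^2 \<le> A * K3 / Z^2"
    proof -
      have "(c - mu2V V f)^2 = (mu2V V f - c)^2" by (simp add: power2_commute)
      also have "\<dots> = (\<integral>x. (f x - c) * \<rho> x ^ 2 \<partial>lebesgue)^2 / Z^2" by (simp add: muc power_divide)
      also have "\<dots> \<le> A * K3 / Z^2"
        using cs unfolding e5 e6 A_def K3_def by (intro divide_right_mono) auto
      finally show ?thesis .
    qed
    define \<mu> where "\<mu> = mu2V V f"
    have sq: "(a - b)^2 \<le> 2 * (a - c')^2 + 2 * (c' - b)^2" for a b c' :: real
    proof -
      have "2 * (a - c')^2 + 2 * (c' - b)^2 - (a - b)^2 = (a - 2 * c' + b)^2"
        by (simp add: power2_eq_square algebra_simps)
      moreover have "0 \<le> (a - 2 * c' + b)^2" by simp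
      ultimately show ?thesis by linarith
    qed
    have step3: "(\<integral>\<^sup>+ x. ennreal ((f x - mu2V V f)\<^sup>2 * exp (V x) / (1 + norm x) powr D
        * (exp (- 2 * V x) / (\<integral>y. exp (- 2 * V y) \<partial>lebesgue))) \<partial>lebesgue)
      \<le> ennreal ((2 / Z + 2 * K3 * I1 / Z ^ 3) * A)"
    proof -
      have "(\<integral>\<^sup>+ x. ennreal ((f x - \<mu>)\<^sup>2 * exp (V x) / (1 + norm x) powr D * (exp (- 2 * V x) / Z)) \<partial>lebesgue)
          \<le> (\<integral>\<^sup>+ x. ennreal (2 / Z * ((f x - c)^2 * \<rho> x * k x) + 2 * (c - \<mu>)^2 / Z * (\<rho> x * k x)) \<partial>lebesgue)"
      proof (rule nn_integral_mono, rule ennreal_leI)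
        fix x :: 'a
        have eV: "exp (V x) = 1 / \<rho> x" by (simp add: \<rho>_def exp_minus field_simps)
        have P: "(1 + norm x) powr D > 0" using kpos[of x] by (simp add: k_def)
        have "(f x - \<mu>)\<^sup>2 * exp (V x) / (1 + norm x) powr D * (exp (- 2 * V x) / Z)
            = (f x - \<mu>)^2 * (\<rho> x * k x / Z)"
          unfolding \<rho>2 eV using \<rho>ne[of x] P Zpos by (simp add: k_def field_simps power2_eq_square)
        also have "\<dots> \<le> (2 * (f x - c)^2 + 2 * (c - \<mu>)^2) * (\<rho> x * k x / Z)"
          using sq \<rho>pos[of x] kpos[of x] Zpos by (intro mult_right_mono) auto
        also have "\<dots> = 2 / Z * ((f x - c)^2 * \<rho> x * k x) + 2 * (c - \<mu>)^2 / Z * (\<rho> x * k x)"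
          by (simp add: divide_inverse algebra_simps)
        finally show "(f x - \<mu>)\<^sup>2 * exp (V x) / (1 + norm x) powr D * (exp (- 2 * V x) / Z)
           \<le> 2 / Z * ((f x - c)^2 * \<rho> x * k x) + 2 * (c - \<mu>)^2 / Z * (\<rho> x * k x)" .
      qed
      also have "\<dots> = ennreal (2 / Z * A + 2 * (c - \<mu>)^2 / Z * I1)"
      proof -
        have ii: "integrable lebesgue (\<lambda>x. 2 / Z * ((f x - c)^2 * \<rho> x * k x) + 2 * (c - \<mu>)^2 / Z * (\<rho> x * k x))"
          using intA int1 by simp
        have "(\<integral>\<^sup>+ x. ennreal (2 / Z * ((f x - c)^2 * \<rho> x * k x) + 2 * (c - \<mu>)^2 / Z * (\<rho> x * k x)) \<partial>lebesgue)
            = ennreal (\<integral>x. 2 / Z * ((f x - c)^2 * \<rho> x * k x) + 2 * (c - \<mu>)^2 / Z * (\<rho> x * k x) \<partial>lebesgue)"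
          by (rule nn_integral_eq_integral[OF ii], rule AE_I2)
             (auto intro!: add_nonneg_nonneg mult_nonneg_nonneg divide_nonneg_nonneg simp: less_imp_le \<rho>pos kpos Zpos)
        also have "\<dots> = ennreal (2 / Z * A + 2 * (c - \<mu>)^2 / Z * I1)"
          using intA int1 by (simp add: A_def I1_def)
        finally show ?thesis .
      qed
      also have "\<dots> \<le> ennreal ((2 / Z + 2 * K3 * I1 / Z ^ 3) * A)"
      proof (rule ennreal_leI)
        have "2 * (c - \<mu>)^2 / Z * I1 \<le> 2 * (A * K3 / Z^2) / Z * I1"
          using step2 Zpos I1nn unfolding \<mu>_def by (intro mult_right_mono divide_right_mono mult_left_mono) auto
        also have "\<dots> = 2 * K3 * I1 / Z ^ 3 * A" using Zpos by (simp add: field_simps power2_eq_square power3_eq_cube)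
        finally show "2 / Z * A + 2 * (c - \<mu>)^2 / Z * I1 \<le> (2 / Z + 2 * K3 * I1 / Z ^ 3) * A"
          by (simp add: algebra_simps)
      qed
      finally show ?thesis unfolding \<mu>_def Z_def .
    qed
    have "ennreal ((2 / Z + 2 * K3 * I1 / Z ^ 3) * A) = ennreal C0 * ennreal (m * A)"
      unfolding C0_def using mpos Ann Zpos K3nn I1nn
      by (simp add: ennreal_mult[symmetric] field_simps)
    also have "\<dots> \<le> ennreal C0 * R" by (intro mult_left_mono step1) auto
    finally show ?thesis using step3 unfolding R_def by (rule order_trans[rotated])
    qed
  qed
qed
end
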